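(* Let $A$ be an $m\times m$ coloring matrix all of whose row sums equal $r$. Then for every color $1\le i\le m$ and every $n\ge1$, $t_A^{(i)}(n)=r^{n-1}C_{n-1}$, and hence $t_A(n)=m\,r^{n-1}C_{n-1}$. In particular, all colors of $A$ are pairwise interchangeable, and any two $m\times m$ coloring matrices whose row sums all equal $r$ are strictly tree coloring equivalent.
   Context: A plane tree is an unlabeled rooted tree in which the children of every vertex are linearly ordered. A coloring matrix is an $m\times m$ matrix $A=(a_{ij})$ with entries in $\{0,1\}$. An $A$-coloring of a plane tree assigns to each vertex a color in $\{1,\dots,m\}$ such that whenever a vertex of color $j$ is a child of a vertex of color $i$, $a_{ij}=1$. Let $t_A(n)$ be the number of pairs (plane tree with $n$ vertices, $A$-coloring of it) and $t_A^{(i)}(n)$ the number of those with root color $i$. $C_k=\frac{1}{k+1}\binom{2k}{k}$ is the $k$-th Catalan number. Colors $i,j$ are interchangeable for $A$ if $t_A^{(i)}(n)=t_A^{(j)}(n)$ for all $n\ge1$. Two coloring matrices $A,B$ of the same size are strictly tree coloring equivalent if $t_A^{(i)}(n)=t_B^{(i)}(n)$ for all $n\ge1$ and all $i$. *)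

theory Defs
  imports Main
begin

datatype ptree = PNode "ptree list"

fun psize :: "ptree \<Rightarrow> nat" where
  "psize (PNode ts) = 1 + sum_list (map psize ts)"

text \<open>A coloring of a plane tree is recorded as a tree of the same shape whose
  vertices carry colors (natural numbers).\<close>
datatype ctree = CNode nat "ctree list"

fun shape :: "ctree \<Rightarrow> ptree" where
  "shape (CNode c ts) = PNode (map shape ts)"

fun root_color :: "ctree \<Rightarrow> nat" where
  "root_color (CNode c ts) = c"

definition coloring_matrix :: "nat \<Rightarrow> (nat \<Rightarrow> nat \<Rightarrow> nat) \<Rightarrow> bool" where
  "coloring_matrix m A \<longleftrightarrow> (\<forall>i\<in>{1..m}. \<forall>j\<in>{1..m}. A i j \<in> {0, 1})"

fun valid_col :: "nat \<Rightarrow> (nat \<Rightarrow> nat \<Rightarrow> nat) \<Rightarrow> ctree \<Rightarrow> bool" where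
  "valid_col m A (CNode c ts) \<longleftrightarrow>
     c \<in> {1..m} \<and> list_all (\<lambda>t. A c (root_color t) = 1 \<and> valid_col m A t) ts"

definition is_A_coloring :: "nat \<Rightarrow> (nat \<Rightarrow> nat \<Rightarrow> nat) \<Rightarrow> ptree \<Rightarrow> ctree \<Rightarrow> bool" where
  "is_A_coloring m A T c \<longleftrightarrow> shape c = T \<and> valid_col m A c"

definition tA :: "nat \<Rightarrow> (nat \<Rightarrow> nat \<Rightarrow> nat) \<Rightarrow> nat \<Rightarrow> nat" where
  "tA m A n = card {(T, c). psize T = n \<and> is_A_coloring m A T c}"

definition tAi :: "nat \<Rightarrow> (nat \<Rightarrow> nat \<Rightarrow> nat) \<Rightarrow> nat \<Rightarrow> nat \<Rightarrow> nat" where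
  "tAi m A i n = card {(T, c). psize T = n \<and> is_A_coloring m A T c \<and> root_color c = i}"

definition catalan :: "nat \<Rightarrow> nat" where
  "catalan k = ((2 * k) choose k) div (k + 1)"

definition interchangeable :: "nat \<Rightarrow> (nat \<Rightarrow> nat \<Rightarrow> nat) \<Rightarrow> nat \<Rightarrow> nat \<Rightarrow> bool" where
  "interchangeable m A i j \<longleftrightarrow> (\<forall>n\<ge>1. tAi m A i n = tAi m A j n)"

definition strictly_equiv :: "nat \<Rightarrow> (nat \<Rightarrow> nat \<Rightarrow> nat) \<Rightarrow> (nat \<Rightarrow> nat \<Rightarrow> nat) \<Rightarrow> bool" where
  "strictly_equiv m A B \<longleftrightarrow> (\<forall>n\<ge>1. \<forall>i\<in>{1..m}. tAi m A i n = tAi m B i n)"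

end

theory Submission
  imports Defs "HOL-Computational_Algebra.Formal_Power_Series"
begin


lemma gchoose_Suc_rec:
  fixes a :: real
  shows "(a gchoose Suc k) * real (Suc k) = (a gchoose k) * (a - real k)"
proof -
  have "fact (Suc k) * (a gchoose Suc k) = (\<Prod>i = 0..<Suc k. a - of_nat i)"
    by (rule gbinomial_mult_fact)
  also have "\<dots> = (\<Prod>i = 0..<k. a - of_nat i) * (a - real k)" by simp
  also have "\<dots> = fact k * (a gchoose k) * (a - real k)" by (simp add: gbinomial_mult_fact)
  finally have "fact k * (real (Suc k) * (a gchoose Suc k)) = fact k * ((a gchoose k) * (a - real k))"
    by (simp add: fact_Suc algebra_simps)
  then have "real (Suc k) * (a gchoose Suc k) = (a gchoose k) * (a - real k)"
    by (simp only: mult_left_cancel[OF fact_nonzero])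
  then show ?thesis by (metis mult.commute)
qed

lemma central_binom_Suc:
  "((2 * Suc k) choose Suc k) * (Suc k) * (Suc k) = (2 * k choose k) * (2 * k + 1) * (2 * k + 2)"
proof -
  have e1: "Suc k * (Suc (2*k+1) choose Suc k) = Suc (2*k+1) * ((2*k+1) choose k)"
    by (rule Suc_times_binomial)
  have e2: "Suc k * (Suc (2*k) choose Suc k) = Suc (2*k) * ((2*k) choose k)"
    by (rule Suc_times_binomial)
  have e3: "((2*k+1) choose k) = ((2*k+1) choose Suc k)"
    using binomial_symmetric[of k "2*k+1"] by simp
  have "2 * Suc k = Suc (2*k+1)" by simp
  then have "((2 * Suc k) choose Suc k) * (Suc k) * (Suc k) = Suc (2*k+1) * (Suc k * (Suc (2*k) choose Suc k))"
    using e1 e3 by (simp add: algebra_simps)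
  also have "\<dots> = (2 * k choose k) * (2 * k + 1) * (2 * k + 2)" using e2 by (simp add: algebra_simps)
  finally show ?thesis .
qed

lemma catalan_dvd: "Suc k dvd (2 * k choose k)"
proof (cases k)
  case 0 then show ?thesis by simp
next
  case (Suc j)
  have a: "Suc k * (2*k choose Suc k) = k * (2*k choose k)"
  proof -
    have "Suc k * (2*k choose Suc k) = 2*k * ((2*k-1) choose k)"
      using times_binomial_minus1_eq[of "Suc k" "2*k"] by simp
    moreover have "k * (2*k choose k) = 2*k * ((2*k-1) choose (k-1))"
      using times_binomial_minus1_eq[of k "2*k"] Suc by simp
    moreover have "((2*k-1) choose k) = ((2*k-1) choose (k-1))"
      using binomial_symmetric[of k "2*k-1"] Suc by (simp add: numeral_2_eq_2)
    ultimately show ?thesis by metis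
  qed
  have "(2*k choose k) = Suc k * (2*k choose k) - k * (2*k choose k)" by simp
  also have "\<dots> = Suc k * ((2*k choose k) - (2*k choose Suc k))"
    using a by (simp add: diff_mult_distrib2)
  finally show ?thesis by (metis dvd_triv_left)
qed

lemma real_catalan: "real (catalan k) = real (2 * k choose k) / real (Suc k)"
  unfolding catalan_def using catalan_dvd[of k] by (simp add: real_of_nat_div)

definition aa :: "nat \<Rightarrow> real" where "aa k = ((1/2::real) gchoose k) * (-4) ^ k"

lemma aa_Suc: "aa (Suc k) = -2 * real (catalan k)"
proof (induction k)
  case 0 then show ?case by (simp add: aa_def real_catalan)
next
  case (Suc k)
  have r: "aa (Suc (Suc k)) * real (Suc (Suc k)) = aa (Suc k) * (1/2 - real (Suc k)) * (-4)"
  proof -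
    have "aa (Suc (Suc k)) * real (Suc (Suc k)) = (((1/2::real) gchoose Suc (Suc k)) * real (Suc (Suc k))) * (-4)^(Suc (Suc k))"
      by (simp add: aa_def)
    also have "\<dots> = (((1/2::real) gchoose Suc k) * (1/2 - real (Suc k))) * (-4)^(Suc (Suc k))"
      by (simp only: gchoose_Suc_rec)
    also have "\<dots> = aa (Suc k) * (1/2 - real (Suc k)) * (-4)"
      unfolding aa_def by (simp only: power_Suc) (simp add: algebra_simps)
    finally show ?thesis .
  qed
  have c: "real (catalan (Suc k)) * real (Suc (Suc k)) = real (catalan k) * (4 * real k + 2)"
  proof -
    have "real ((2 * Suc k) choose Suc k) * (Suc k) * (Suc k) = real (2 * k choose k) * (2 * k + 1) * (2 * k + 2)"
      using central_binom_Suc[of k] by (metis of_nat_mult)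
    moreover have "\<And>X Y::real. X * real (Suc k) * real (Suc k) = Y * (2 * k + 1) * (2 * k + 2) \<Longrightarrow>
       X / real (Suc (Suc k)) * real (Suc (Suc k)) = Y / real (Suc k) * (4 * real k + 2)"
    proof -
      fix X Y :: real assume h: "X * real (Suc k) * real (Suc k) = Y * (2 * k + 1) * (2 * k + 2)"
      have "X * real (Suc k) * real (Suc k) = (Y / real (Suc k) * (4 * real k + 2)) * real (Suc k) * real (Suc k)"
        using h by (simp add: field_simps)
      then have "X = Y / real (Suc k) * (4 * real k + 2)" by (metis mult_right_cancel of_nat_eq_0_iff nat.distinct(1))
      then show "X / real (Suc (Suc k)) * real (Suc (Suc k)) = Y / real (Suc k) * (4 * real k + 2)" by simp
    qed
    ultimately show ?thesis unfolding real_catalan by blast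
  qed
  have "aa (Suc (Suc k)) * real (Suc (Suc k)) = -2 * real (catalan (Suc k)) * real (Suc (Suc k))"
    using r c Suc by (simp add: algebra_simps)
  then show ?case by (metis mult_right_cancel of_nat_eq_0_iff nat.distinct(1))
qed

lemma catalan_0: "catalan 0 = 1" by (simp add: catalan_def)

lemma catalan_Suc: "catalan (Suc n) = (\<Sum>k\<le>n. catalan k * catalan (n - k))"
proof -
  have V: "(\<Sum>k\<le>Suc (Suc n). ((1/2::real) gchoose k) * ((1/2) gchoose (Suc (Suc n) - k))) = 0"
    using gbinomial_Vandermonde[of "1/2::real" "1/2" "Suc (Suc n)"]
    by (simp add: atLeast0AtMost gbinomial_0_left[of "Suc (Suc n)", symmetric, simplified] gbinomial_Suc_Suc[of 0, simplified])
  have "(\<Sum>k\<le>Suc (Suc n). aa k * aa (Suc (Suc n) - k)) = (-4)^(Suc (Suc n)) * (\<Sum>k\<le>Suc (Suc n). ((1/2::real) gchoose k) * ((1/2) gchoose (Suc (Suc n) - k)))"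
    unfolding aa_def sum_distrib_left
    by (intro sum.cong refl) (simp add: algebra_simps power_add[symmetric])
  with V have S: "(\<Sum>k\<le>Suc (Suc n). aa k * aa (Suc (Suc n) - k)) = 0" by simp
  have "(\<Sum>k\<le>Suc (Suc n). aa k * aa (Suc (Suc n) - k)) = aa 0 * aa (Suc (Suc n)) + (\<Sum>k\<le>Suc n. aa (Suc k) * aa (Suc n - k))"
    by (subst sum.atMost_Suc_shift) simp
  also have "\<dots> = 2 * aa (Suc (Suc n)) + (\<Sum>k\<le>n. aa (Suc k) * aa (Suc (n - k)))"
    by (simp add: aa_def Suc_diff_le)
  also have "\<dots> = -4 * real (catalan (Suc n)) + 4 * (\<Sum>k\<le>n. real (catalan k * catalan (n - k)))"
    by (simp add: aa_Suc sum_distrib_left)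
  finally have "real (catalan (Suc n)) = (\<Sum>k\<le>n. real (catalan k * catalan (n - k)))"
    using S by simp
  then show ?thesis by (metis of_nat_sum of_nat_eq_iff)
qed


definition sz :: "ctree \<Rightarrow> nat" where "sz t = psize (shape t)"
definition fsz :: "ctree list \<Rightarrow> nat" where "fsz ts = sum_list (map sz ts)"

lemma sz_CNode[simp]: "sz (CNode c ts) = Suc (fsz ts)"
  unfolding fsz_def sz_def[abs_def] by (simp add: comp_def)

lemma sz_pos: "sz t \<ge> 1"
  by (cases t) simp

lemma fsz_Nil[simp]: "fsz [] = 0" and fsz_Cons[simp]: "fsz (t # ts) = sz t + fsz ts"
  by (simp_all add: fsz_def)

definition CT :: "nat \<Rightarrow> (nat \<Rightarrow> nat \<Rightarrow> nat) \<Rightarrow> nat \<Rightarrow> nat \<Rightarrow> ctree set" where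
  "CT m A j k = {t. valid_col m A t \<and> root_color t = j \<and> sz t = k}"

definition FF :: "nat \<Rightarrow> (nat \<Rightarrow> nat \<Rightarrow> nat) \<Rightarrow> nat \<Rightarrow> nat \<Rightarrow> ctree list set" where
  "FF m A i n = {ts. list_all (\<lambda>t. A i (root_color t) = 1 \<and> valid_col m A t) ts \<and> fsz ts = n}"

lemma inj_CNode: "inj_on (CNode j) X" by (auto simp: inj_on_def)

lemma CT_Suc: "j \<in> {1..m} \<Longrightarrow> CT m A j (Suc k) = CNode j ` FF m A j k"
proof (intro equalityI subsetI)
  fix t assume "j \<in> {1..m}" "t \<in> CT m A j (Suc k)"
  then show "t \<in> CNode j ` FF m A j k"
    by (cases t) (auto simp: CT_def FF_def)
next
  fix t assume "j \<in> {1..m}" "t \<in> CNode j ` FF m A j k"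
  then show "t \<in> CT m A j (Suc k)"
    by (auto simp: CT_def FF_def)
qed

lemma FF_0: "FF m A i 0 = {[]}"
proof -
  have "fsz ts = 0 \<Longrightarrow> ts = []" for ts
    using sz_pos[of "hd ts"] by (cases ts) auto
  then show ?thesis by (auto simp: FF_def)
qed

lemma FF_Suc: "FF m A i (Suc n) = (\<lambda>(t,ts). t # ts) `
   (\<Union>k\<in>{..n}. \<Union>j\<in>{j\<in>{1..m}. A i j = 1}. CT m A j (Suc k) \<times> FF m A i (n - k))"
proof (intro equalityI subsetI)
  fix ts assume h: "ts \<in> FF m A i (Suc n)"
  then obtain t ts' where ts: "ts = t # ts'"
    by (cases ts) (auto simp: FF_def)
  obtain c us where t: "t = CNode c us" by (cases t)
  let ?k = "fsz us"
  have "(t, ts') \<in> CT m A c (Suc ?k) \<times> FF m A i (n - ?k)" "?k \<le> n" "c \<in> {1..m}" "A i c = 1"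
    using h unfolding ts t by (auto simp: CT_def FF_def)
  then show "ts \<in> (\<lambda>(t,ts). t # ts) `
   (\<Union>k\<in>{..n}. \<Union>j\<in>{j\<in>{1..m}. A i j = 1}. CT m A j (Suc k) \<times> FF m A i (n - k))"
    unfolding ts by blast
next
  fix ts assume "ts \<in> (\<lambda>(t,ts). t # ts) `
   (\<Union>k\<in>{..n}. \<Union>j\<in>{j\<in>{1..m}. A i j = 1}. CT m A j (Suc k) \<times> FF m A i (n - k))"
  then show "ts \<in> FF m A i (Suc n)"
    by (auto simp: CT_def FF_def)
qed

lemma card_J:
  assumes "coloring_matrix m A" "i \<in> {1..m}"
  shows "card {j\<in>{1..m}. A i j = 1} = (\<Sum>j=1..m. A i j)"
proof -
  have h: "\<And>j. j\<in>{1..m} \<Longrightarrow> A i j = 0 \<or> A i j = 1"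
    using assms unfolding coloring_matrix_def by blast
  have "(\<Sum>j=1..m. A i j) = (\<Sum>j\<in>{1..m}. if A i j = 1 then 1 else 0)"
  proof (intro sum.cong refl)
    fix j assume "j \<in> {1..m}"
    then show "A i j = (if A i j = 1 then 1 else 0)" using h[of j] by auto
  qed
  also have "\<dots> = card ({1..m} \<inter> {j. A i j = 1})"
    by (simp add: sum.If_cases)
  also have "{1..m} \<inter> {j. A i j = 1} = {j\<in>{1..m}. A i j = 1}"
    by (simp add: set_eq_iff)
  finally show ?thesis by simp
qed


lemma count_FF:
  assumes cm: "coloring_matrix m A" and rs: "\<forall>i\<in>{1..m}. (\<Sum>j=1..m. A i j) = r"
  shows "\<forall>i\<in>{1..m}. finite (FF m A i n) \<and> card (FF m A i n) = r ^ n * catalan n"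
proof (induction n rule: less_induct)
  case (less n)
  show ?case
  proof (cases n)
    case 0 then show ?thesis by (simp add: FF_0 catalan_0)
  next
    case (Suc n')
    show ?thesis
    proof
      fix i assume i: "i \<in> {1..m}"
      let ?J = "{j\<in>{1..m}. A i j = 1}"
      have IH: "\<And>k j. k \<le> n' \<Longrightarrow> j \<in> {1..m} \<Longrightarrow> finite (FF m A j k) \<and> card (FF m A j k) = r ^ k * catalan k"
        using less Suc by auto
      have fin: "finite (CT m A j (Suc k) \<times> FF m A i (n' - k))" if "k \<le> n'" "j \<in> ?J" for k j
        using IH[of k j] IH[of "n'-k" i] that i by (simp add: CT_Suc)
      have cardP: "card (CT m A j (Suc k) \<times> FF m A i (n' - k)) = r ^ k * catalan k * (r ^ (n' - k) * catalan (n' - k))"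
        if "k \<le> n'" "j \<in> ?J" for k j
        using IH[of k j] IH[of "n'-k" i] that i by (simp add: CT_Suc card_image[OF inj_CNode] card_cartesian_product)
      have disj1: "(\<Union>j\<in>?J. CT m A j (Suc k) \<times> FF m A i (n' - k)) \<inter> (\<Union>j\<in>?J. CT m A j (Suc k') \<times> FF m A i (n' - k')) = {}"
        if "k \<noteq> k'" for k k'
        using that by (auto simp: CT_def)
      have inj: "inj_on (\<lambda>(t,ts). t # ts) X" for X :: "(ctree \<times> ctree list) set"
        by (auto simp: inj_on_def)
      have finJ: "finite ?J" by simp
      have fin2: "finite (\<Union>j\<in>?J. CT m A j (Suc k) \<times> FF m A i (n' - k))" if "k \<in> {..n'}" for k
        using fin that by (intro finite_UN_I finJ) auto
      have disj2: "(CT m A j (Suc k) \<times> FF m A i (n' - k)) \<inter> (CT m A j' (Suc k) \<times> FF m A i (n' - k)) = {}"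
        if "j \<noteq> j'" for j j' k
        using that by (auto simp: CT_def)
      have "card (FF m A i n) = card (\<Union>k\<in>{..n'}. \<Union>j\<in>?J. CT m A j (Suc k) \<times> FF m A i (n' - k))"
        unfolding Suc FF_Suc by (rule card_image[OF inj])
      also have "\<dots> = (\<Sum>k\<in>{..n'}. card (\<Union>j\<in>?J. CT m A j (Suc k) \<times> FF m A i (n' - k)))"
        by (rule card_UN_disjoint) (simp, use fin2 in blast, use disj1 in blast)
      also have "\<dots> = (\<Sum>k\<in>{..n'}. (\<Sum>j\<in>?J. card (CT m A j (Suc k) \<times> FF m A i (n' - k))))"
        by (intro sum.cong refl card_UN_disjoint finJ) (use fin disj2 in blast)+
      also have "\<dots> = (\<Sum>k\<in>{..n'}. (\<Sum>j\<in>?J. r ^ k * catalan k * (r ^ (n' - k) * catalan (n' - k))))"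
        by (intro sum.cong refl) (simp add: cardP)
      also have "\<dots> = (\<Sum>k\<in>{..n'}. r * (r ^ n' * (catalan k * catalan (n' - k))))"
      proof (intro sum.cong refl)
        fix k assume k: "k \<in> {..n'}"
        have "r ^ k * r ^ (n' - k) = r ^ n'" using k by (simp add: power_add[symmetric])
        then show "(\<Sum>j\<in>?J. r ^ k * catalan k * (r ^ (n' - k) * catalan (n' - k))) = r * (r ^ n' * (catalan k * catalan (n' - k)))"
          using card_J[OF cm i] rs i by (simp add: algebra_simps)
      qed
      also have "\<dots> = r ^ n * catalan n"
        unfolding Suc catalan_Suc by (subst sum_distrib_left) (intro sum.cong refl, simp)
      finally have c: "card (FF m A i n) = r ^ n * catalan n" .
      have "finite (FF m A i n)"
        unfolding Suc FF_Suc using fin2 by (intro finite_imageI finite_UN_I) auto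
      with c show "finite (FF m A i n) \<and> card (FF m A i n) = r ^ n * catalan n" by simp
    qed
  qed
qed



lemma pairs_eq: "{(T, c). psize T = n \<and> is_A_coloring m A T c \<and> P c} = (\<lambda>c. (shape c, c)) ` {c. valid_col m A c \<and> sz c = n \<and> P c}"
  by (auto simp: is_A_coloring_def sz_def)

lemma inj_pair: "inj_on (\<lambda>c. (shape c, c)) X" by (auto simp: inj_on_def)

lemma CT_card:
  assumes cm: "coloring_matrix m A" and rs: "\<forall>i\<in>{1..m}. (\<Sum>j=1..m. A i j) = r"
    and i: "i \<in> {1..m}" and n: "n \<ge> 1"
  shows "finite (CT m A i n) \<and> card (CT m A i n) = r ^ (n - 1) * catalan (n - 1)"
proof -
  obtain n' where n': "n = Suc n'" using n by (cases n) auto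
  show ?thesis using count_FF[OF cm rs, of n'] i
    by (simp add: n' CT_Suc card_image[OF inj_CNode])
qed

lemma tAi_eq:
  assumes cm: "coloring_matrix m A" and rs: "\<forall>i\<in>{1..m}. (\<Sum>j=1..m. A i j) = r"
    and i: "i \<in> {1..m}" and n: "n \<ge> 1"
  shows "tAi m A i n = r ^ (n - 1) * catalan (n - 1)"
proof -
  have "tAi m A i n = card ((\<lambda>c. (shape c, c)) ` CT m A i n)"
    unfolding tAi_def pairs_eq CT_def by (rule arg_cong[where f=card]) auto
  also have "\<dots> = card (CT m A i n)" by (rule card_image[OF inj_pair])
  finally show ?thesis using CT_card[OF assms] by simp
qed

lemma tA_eq:
  assumes cm: "coloring_matrix m A" and rs: "\<forall>i\<in>{1..m}. (\<Sum>j=1..m. A i j) = r"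
    and n: "n \<ge> 1"
  shows "tA m A n = m * r ^ (n - 1) * catalan (n - 1)"
proof -
  have "tA m A n = card ((\<lambda>c. (shape c, c)) ` (\<Union>i\<in>{1..m}. CT m A i n))"
  proof -
    have "{(T, c). psize T = n \<and> is_A_coloring m A T c} = {(T, c). psize T = n \<and> is_A_coloring m A T c \<and> True}"
      by simp
    also have "\<dots> = (\<lambda>c. (shape c, c)) ` {c. valid_col m A c \<and> sz c = n \<and> True}" by (rule pairs_eq)
    also have "{c. valid_col m A c \<and> sz c = n \<and> True} = (\<Union>i\<in>{1..m}. CT m A i n)"
    proof (intro equalityI subsetI)
      fix c assume "c \<in> {c. valid_col m A c \<and> sz c = n \<and> True}"
      then show "c \<in> (\<Union>i\<in>{1..m}. CT m A i n)" by (cases c) (auto simp: CT_def)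
    qed (auto simp: CT_def)
    finally show ?thesis unfolding tA_def by simp
  qed
  also have "\<dots> = card (\<Union>i\<in>{1..m}. CT m A i n)" by (rule card_image[OF inj_pair])
  also have "\<dots> = (\<Sum>i\<in>{1..m}. card (CT m A i n))"
    by (rule card_UN_disjoint) (use CT_card[OF cm rs _ n] in \<open>auto simp: CT_def\<close>)
  also have "\<dots> = (\<Sum>i\<in>{1..m}. r ^ (n - 1) * catalan (n - 1))"
    by (rule sum.cong) (use CT_card[OF cm rs _ n] in auto)
  finally show ?thesis by simp
qed

theorem theorem20:
  fixes m r :: nat and A :: "nat \<Rightarrow> nat \<Rightarrow> nat"
  assumes "coloring_matrix m A"
    and "\<forall>i\<in>{1..m}. (\<Sum>j=1..m. A i j) = r"
  shows "(\<forall>i\<in>{1..m}. \<forall>n\<ge>1. tAi m A i n = r ^ (n - 1) * catalan (n - 1))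
    \<and> (\<forall>n\<ge>1. tA m A n = m * r ^ (n - 1) * catalan (n - 1))
    \<and> (\<forall>i\<in>{1..m}. \<forall>j\<in>{1..m}. interchangeable m A i j)
    \<and> (\<forall>B. coloring_matrix m B \<and> (\<forall>i\<in>{1..m}. (\<Sum>j=1..m. B i j) = r)
           \<longrightarrow> strictly_equiv m A B)"
proof -
  have B: "strictly_equiv m A B" if "coloring_matrix m B" "\<forall>i\<in>{1..m}. (\<Sum>j=1..m. B i j) = r" for B
    unfolding strictly_equiv_def using tAi_eq[OF assms] tAi_eq[OF that] by simp
  show ?thesis
    using tAi_eq[OF assms] tA_eq[OF assms] B
    unfolding interchangeable_def by simp
qed

end
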